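(* Let $X$ be a Minkowski plane with unit ball $B$. For $i=1,2,3$ let $\ell_i$ be a supporting line of $B$ and $A_i=B\cap\ell_i$. Suppose that for all distinct $i,j\in\{1,2,3\}$ there exist $\mathbf{a}_i\in A_i$ and $\mathbf{a}_j\in A_j$ with $\|\mathbf{a}_i+\mathbf{a}_j\|=1$, and that $A_1\cup A_2\cup A_3$ is not contained in any closed half-plane bounded by a line through the origin. Then there exist $\mathbf{a}_i\in A_i$ ($i=1,2,3$) such that $\mathbf{a}_1+\mathbf{a}_2+\mathbf{a}_3=\mathbf{o}$.
   Context: A Minkowski plane is a two-dimensional real normed space $(X,\|\cdot\|)$ with unit ball $B=\{\mathbf{x}:\|\mathbf{x}\|\le1\}$. *)

theory Defs
  imports "HOL-Analysis.Analysis"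
begin

text \<open>A line in a real vector space of dimension 2 is the level set {x. f x = c} of a
nonzero linear functional f; the two closed half-planes bounded by it are
{x. f x \<le> c} and {x. f x \<ge> c} (the latter is {x. (-f) x \<le> -c}).\<close>

definition supporting_line :: "'a::real_vector set \<Rightarrow> 'a set \<Rightarrow> bool" where
  "supporting_line L K \<longleftrightarrow>
     (\<exists>f c. linear (f :: 'a \<Rightarrow> real) \<and> (\<exists>x. f x \<noteq> 0) \<and> L = {x. f x = c}
        \<and> K \<subseteq> {x. f x \<le> c} \<and> L \<inter> K \<noteq> {})"

definition in_origin_halfplane :: "'a::real_vector set \<Rightarrow> bool" where
  "in_origin_halfplane S \<longleftrightarrow>
     (\<exists>f. linear (f :: 'a \<Rightarrow> real) \<and> (\<exists>x. f x \<noteq> 0) \<and> S \<subseteq> {x. f x \<le> 0})"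

end

theory Submission
  imports Defs
begin

lemma span2:
  assumes dim2: "dim (UNIV :: 'a::real_vector set) = 2" and v: "v \<noteq> 0" and w: "\<forall>t. w \<noteq> t *\<^sub>R v"
  shows "\<exists>a b. (x::'a) = a *\<^sub>R v + b *\<^sub>R w"
proof -
  obtain B :: "'a set" where B: "independent B" "UNIV \<subseteq> span B" "card B = 2"
    using basis_exists[of "UNIV :: 'a set"] dim2 by auto
  have finB: "finite B" using B(3) card.infinite by fastforce
  have wv: "w \<noteq> v" using w by (metis scaleR_one)
  have iv: "independent {v}" using v by (simp add: independent_insert)
  have wsp: "w \<notin> span {v}" using w by (auto simp: span_singleton)
  have ivw: "independent {w, v}" using iv wsp wv by (simp add: independent_insert)
  have "x \<in> span {w, v}"
  proof (rule ccontr)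
    assume nx: "x \<notin> span {w, v}"
    have xn: "x \<notin> {w, v}" using nx span_base by blast
    have "independent {x, w, v}" using ivw nx xn by (simp add: independent_insert)
    then have "card {x, w, v} \<le> card B"
      using independent_span_bound[OF finB, of "{x, w, v}"] B(2) by auto
    moreover have "card {x, w, v} = 3" using xn wv by auto
    ultimately show False using B(3) by simp
  qed
  then obtain b where "x - b *\<^sub>R w \<in> span {v}" using span_breakdown_eq by blast
  then obtain a where "x - b *\<^sub>R w = a *\<^sub>R v" by (auto simp: span_singleton)
  then show ?thesis by (metis diff_add_cancel add.commute)
qed

lemma lin_facts:
  assumes "linear (g :: 'a::real_vector \<Rightarrow> real)"
  shows "g (x + y) = g x + g y" "g (x - y) = g x - g y" "g (- x) = - g x" "g (c *\<^sub>R x) = c * g x" "g 0 = 0"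
  using assms by (simp_all add: linear_add linear_diff linear_neg linear_cmul linear_0)

lemma gneg:
  assumes "linear (g :: 'a::real_normed_vector \<Rightarrow> real)" "\<forall>y. g y \<le> norm y"
  shows "- norm y \<le> g y"
proof -
  have "g (- y) \<le> norm (- y)" using assms by blast
  then show ?thesis using lin_facts[OF assms(1)] by simp
qed

lemma indep_pair:
  assumes "norm (xi::'a::real_normed_vector) \<le> 1" "norm xj \<le> 1" "norm (xi + xj) = 1"
    "linear gi" "\<forall>y. gi y \<le> norm y" "gi xi = 1" "linear gj" "\<forall>y. gj y \<le> norm y" "gj xj = 1"
  shows "xi \<noteq> 0" "\<forall>t. xj \<noteq> t *\<^sub>R xi"
proof -
  show "xi \<noteq> 0" using assms lin_facts(5)[OF assms(4)] by auto
  have n1: "norm xi = 1" using assms by (metis antisym)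
  have n2: "norm xj = 1" using assms by (metis antisym)
  show "\<forall>t. xj \<noteq> t *\<^sub>R xi"
  proof (intro allI notI)
    fix t assume t: "xj = t *\<^sub>R xi"
    then have "\<bar>t\<bar> = 1" using n1 n2 by simp
    moreover have "\<bar>1 + t\<bar> = 1"
    proof -
      have "xi + xj = (1 + t) *\<^sub>R xi" using t by (simp add: algebra_simps)
      then show ?thesis using assms(3) n1 by simp
    qed
    ultimately show False by linarith
  qed
qed

lemma crux:
  fixes gi gj gk :: "'a::real_normed_vector \<Rightarrow> real"
  assumes dim2: "dim (UNIV::'a set) = 2"
    and li: "linear gi" and lj: "linear gj" and lk: "linear gk"
    and bi: "\<forall>y. gi y \<le> norm y" and bj: "\<forall>y. gj y \<le> norm y" and bk: "\<forall>y. gk y \<le> norm y"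
    and rep: "\<forall>x. - gk x = \<alpha> * gi x + \<beta> * gj x" and al: "0 \<le> \<alpha>" and be: "0 \<le> \<beta>"
    and xi: "norm xi \<le> 1" "gi xi = 1" and xj: "norm xj \<le> 1" "gj xj = 1" and xs: "norm (xi + xj) = 1"
    and zi: "norm zi \<le> 1" "gi zi = 1" and zk: "norm zk \<le> 1" "gk zk = 1" and zs: "norm (zi + zk) \<le> 1"
    and wj: "norm wj \<le> 1" "gj wj = 1" and wk: "norm wk \<le> 1" "gk wk = 1" and ws: "norm (wj + wk) \<le> 1"
  shows "\<exists>ai aj. norm ai \<le> 1 \<and> gi ai = 1 \<and> norm aj \<le> 1 \<and> gj aj = 1 \<and> gk (ai + aj) \<le> -1"
proof (rule ccontr)
  assume H: "\<not> ?thesis"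
  note Li = lin_facts[OF li] and Lj = lin_facts[OF lj] and Lk = lin_facts[OF lk]
  define ai where "ai = (if gj zi \<ge> gj xi then zi else xi)"
  define aj where "aj = (if gi wj \<ge> gi xj then wj else xj)"
  have ai: "norm ai \<le> 1" "gi ai = 1" "gj ai \<ge> gj zi" "gj ai \<ge> gj xi"
    using zi xi by (auto simp: ai_def)
  have aj: "norm aj \<le> 1" "gj aj = 1" "gi aj \<ge> gi wj" "gi aj \<ge> gi xj"
    using wj xj by (auto simp: aj_def)
  have gku: "gk ai + gk aj > -1" using H ai aj Lk(1) by force
  define U1 where "U1 = 1 + gi aj"
  define U2 where "U2 = gj ai + 1"
  define p1 where "p1 = - gi zk"
  define p2 where "p2 = - gj zk"
  define q1 where "q1 = - gi wk"
  define q2 where "q2 = - gj wk"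
  have "gj (zi + zk) \<ge> -1" using gneg[OF lj bj, of "zi + zk"] zs by linarith
  then have hB': "U2 - p2 \<ge> 0" using ai(3) Lj(1) by (simp add: U2_def p2_def)
  have "gi (wj + wk) \<ge> -1" using gneg[OF li bi, of "wj + wk"] ws by linarith
  then have hA': "U1 - q1 \<ge> 0" using aj(3) Li(1) by (simp add: U1_def q1_def)
  have e1: "\<alpha> * (U1 - p1) + \<beta> * (U2 - p2) < 0"
  proof -
    have "- gk (ai + aj + zk) = \<alpha> * gi (ai + aj + zk) + \<beta> * gj (ai + aj + zk)" using rep by blast
    moreover have "gi (ai + aj + zk) = U1 - p1" using ai aj Li(1) by (simp add: U1_def p1_def)
    moreover have "gj (ai + aj + zk) = U2 - p2" using ai aj Lj(1) by (simp add: U2_def p2_def)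
    moreover have "gk (ai + aj + zk) = gk ai + gk aj + 1" using zk Lk(1) by simp
    ultimately have "- (gk ai + gk aj + 1) = \<alpha> * (U1 - p1) + \<beta> * (U2 - p2)" by simp
    then show ?thesis using gku by linarith
  qed
  have e2: "\<alpha> * (U1 - q1) + \<beta> * (U2 - q2) < 0"
  proof -
    have "- gk (ai + aj + wk) = \<alpha> * gi (ai + aj + wk) + \<beta> * gj (ai + aj + wk)" using rep by blast
    moreover have "gi (ai + aj + wk) = U1 - q1" using ai aj Li(1) by (simp add: U1_def q1_def)
    moreover have "gj (ai + aj + wk) = U2 - q2" using ai aj Lj(1) by (simp add: U2_def q2_def)
    moreover have "gk (ai + aj + wk) = gk ai + gk aj + 1" using wk Lk(1) by simp
    ultimately have "- (gk ai + gk aj + 1) = \<alpha> * (U1 - q1) + \<beta> * (U2 - q2)" by simp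
    then show ?thesis using gku by linarith
  qed
  define A1 where "A1 = p1 - U1"
  define A2 where "A2 = U1 - q1"
  define B1 where "B1 = q2 - U2"
  define B2 where "B2 = U2 - p2"
  have f1: "\<alpha> * A1 > \<beta> * B2" using e1 by (simp add: A1_def B2_def algebra_simps)
  have f2: "\<beta> * B1 > \<alpha> * A2" using e2 by (simp add: A2_def B1_def algebra_simps)
  have A2nn: "A2 \<ge> 0" using hA' by (simp add: A2_def)
  have B2nn: "B2 \<ge> 0" using hB' by (simp add: B2_def)
  have bb: "\<beta> * B2 \<ge> 0" using be B2nn by simp
  have aa: "\<alpha> * A2 \<ge> 0" using al A2nn by simp
  have A1p: "A1 > 0"
  proof (rule ccontr)
    assume "\<not> A1 > 0" then have "\<alpha> * A1 \<le> 0" using al by (simp add: mult_nonneg_nonpos)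
    then show False using f1 bb by linarith
  qed
  have B1p: "B1 > 0"
  proof (rule ccontr)
    assume "\<not> B1 > 0" then have "\<beta> * B1 \<le> 0" using be by (simp add: mult_nonneg_nonpos)
    then show False using f2 aa by linarith
  qed
  have prod: "(\<beta> * B2) * (\<alpha> * A2) < (\<alpha> * A1) * (\<beta> * B1)"
    using mult_strict_mono[OF f1 f2] bb aa f1 by linarith
  have AB: "A1 * B1 - A2 * B2 > 0"
  proof (rule ccontr)
    assume "\<not> A1 * B1 - A2 * B2 > 0"
    then have "(\<alpha> * \<beta>) * (A1 * B1 - A2 * B2) \<le> 0" using al be
      by (simp add: mult_nonneg_nonpos)
    then show False using prod by (simp add: algebra_simps)
  qed
  define w1 where "w1 = B1 * (A1 + A2)"
  define w2 where "w2 = A1 * (B1 + B2)"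
  have w1p: "w1 > 0" using B1p A1p A2nn by (simp add: w1_def)
  have w2p: "w2 > 0" using B1p A1p B2nn by (simp add: w2_def)
  define W where "W = w1 + w2"
  have Wp: "W > 0" using w1p w2p by (simp add: W_def)
  define bs where "bs = (w1 / W) *\<^sub>R (- zk) + (w2 / W) *\<^sub>R (- wk)"
  have nbs: "norm bs \<le> 1"
  proof -
    have "norm bs \<le> norm ((w1 / W) *\<^sub>R (- zk)) + norm ((w2 / W) *\<^sub>R (- wk))"
      unfolding bs_def by (rule norm_triangle_ineq)
    also have "\<dots> = (w1 / W) * norm zk + (w2 / W) * norm wk" using w1p w2p Wp by simp
    also have "\<dots> \<le> (w1 / W) * 1 + (w2 / W) * 1"
      using zk wk w1p w2p Wp by (intro add_mono mult_left_mono) auto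
    also have "\<dots> = 1" using Wp by (simp add: W_def add_divide_distrib[symmetric])
    finally show ?thesis .
  qed
  have gibs: "gi bs * W = w1 * p1 + w2 * q1"
    using Wp by (simp add: bs_def Li p1_def q1_def field_simps)
  have gjbs: "gj bs * W = w1 * p2 + w2 * q2"
    using Wp by (simp add: bs_def Lj p2_def q2_def field_simps)
  have gibs2: "gi bs > U1"
  proof -
    have "w1 * A1 - w2 * A2 = A1 * (A1 * B1 - A2 * B2)" by (simp add: w1_def w2_def algebra_simps)
    then have "w1 * A1 - w2 * A2 > 0" using A1p AB by simp
    then have "w1 * p1 + w2 * q1 > U1 * W" by (simp add: A1_def A2_def W_def algebra_simps)
    then show ?thesis using gibs Wp by (metis mult_less_cancel_right_pos)
  qed
  have gjbs2: "gj bs > U2"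
  proof -
    have "w2 * B1 - w1 * B2 = B1 * (A1 * B1 - A2 * B2)" by (simp add: w1_def w2_def algebra_simps)
    then have "w2 * B1 - w1 * B2 > 0" using B1p AB by simp
    then have "w1 * p2 + w2 * q2 > U2 * W" by (simp add: B1_def B2_def W_def algebra_simps)
    then show ?thesis using gjbs Wp by (metis mult_less_cancel_right_pos)
  qed
  define s where "s = xi + xj"
  define c where "c = - gj xi"
  define d where "d = - gi xj"
  have gis: "gi s = 1 - d" using xi Li(1) by (simp add: s_def d_def)
  have gjs: "gj s = 1 - c" using xj Lj(1) by (simp add: s_def c_def)
  have sU1: "gi s \<le> U1" using gis aj(4) by (simp add: U1_def d_def)
  have sU2: "gj s \<le> U2" using gjs ai(4) by (simp add: U2_def c_def)
  have c0: "c \<ge> 0" using bj[rule_format, of s] xs gjs by (simp add: s_def)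
  have d0: "d \<ge> 0" using bi[rule_format, of s] xs gis by (simp add: s_def)
  have c1: "c \<le> 1" using gneg[OF lj bj, of xi] xi by (simp add: c_def)
  have d1: "d \<le> 1" using gneg[OF li bi, of xj] xj by (simp add: d_def)
  have ip: "xi \<noteq> 0" "\<forall>t. xj \<noteq> t *\<^sub>R xi"
    using indep_pair[OF xi(1) xj(1) xs li bi xi(2) lj bj xj(2)] by auto
  obtain P Q where rp: "bs - s = P *\<^sub>R xi + Q *\<^sub>R xj" using span2[OF dim2 ip] by blast
  define eX where "eX = gi bs - gi s"
  define eY where "eY = gj bs - gj s"
  have eXp: "eX > 0" using gibs2 sU1 by (simp add: eX_def)
  have eYp: "eY > 0" using gjbs2 sU2 by (simp add: eY_def)
  have eqX: "eX = P - d * Q"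
  proof -
    have "gi (bs - s) = gi (P *\<^sub>R xi + Q *\<^sub>R xj)" using rp by simp
    then show ?thesis using xi by (simp add: Li eX_def d_def)
  qed
  have eqY: "eY = Q - c * P"
  proof -
    have "gj (bs - s) = gj (P *\<^sub>R xi + Q *\<^sub>R xj)" using rp by simp
    then show ?thesis using xj by (simp add: Lj eY_def c_def)
  qed
  have Pe: "P * (1 - c * d) = eX + d * eY" unfolding eqX eqY by (simp add: algebra_simps)
  have Qe: "Q * (1 - c * d) = eY + c * eX" unfolding eqX eqY by (simp add: algebra_simps)
  have cd1: "1 - c * d \<ge> 0" using c0 c1 d0 d1 by (simp add: mult_le_one)
  have Pp: "P > 0"
  proof (rule ccontr)
    assume "\<not> P > 0" then have "P * (1 - c * d) \<le> 0" using cd1 by (simp add: mult_nonpos_nonneg)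
    moreover have "eX + d * eY > 0" using eXp eYp d0 by (simp add: add_pos_nonneg)
    ultimately show False using Pe by linarith
  qed
  have Qp: "Q > 0"
  proof (rule ccontr)
    assume "\<not> Q > 0" then have "Q * (1 - c * d) \<le> 0" using cd1 by (simp add: mult_nonpos_nonneg)
    moreover have "eY + c * eX > 0" using eXp eYp c0 by (simp add: add_pos_nonneg)
    ultimately show False using Qe by linarith
  qed
  define M where "M = max P Q"
  define l3 where "l3 = 1 / (1 + M)"
  define l1 where "l1 = 1 - l3 * (1 + P)"
  define l2 where "l2 = 1 - l3 * (1 + Q)"
  have Mp: "M > 0" "P \<le> M" "Q \<le> M" "M < P + Q" using Pp Qp by (auto simp: M_def)
  have l3p: "l3 > 0" using Mp by (simp add: l3_def)
  have l1n: "l1 \<ge> 0" using Mp by (simp add: l1_def l3_def field_simps)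
  have l2n: "l2 \<ge> 0" using Mp by (simp add: l2_def l3_def field_simps)
  have ls1: "l1 + l2 + l3 = 2 - l3 * (1 + P + Q)" by (simp add: l1_def l2_def algebra_simps)
  have ls2: "l3 * (1 + P + Q) > 1" using Mp by (simp add: l3_def field_simps)
  have lsum: "l1 + l2 + l3 < 1" using ls1 ls2 by linarith
  have srep: "s = l1 *\<^sub>R xi + l2 *\<^sub>R xj + l3 *\<^sub>R bs"
  proof -
    have bsr: "bs = (1 + P) *\<^sub>R xi + (1 + Q) *\<^sub>R xj" using rp by (simp add: s_def algebra_simps)
    have "l1 *\<^sub>R xi + l2 *\<^sub>R xj + l3 *\<^sub>R bs = (l1 + l3 * (1 + P)) *\<^sub>R xi + (l2 + l3 * (1 + Q)) *\<^sub>R xj"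
      by (simp add: bsr algebra_simps)
    also have "\<dots> = s" by (simp add: l1_def l2_def s_def)
    finally show ?thesis by simp
  qed
  have "norm s \<le> l1 * norm xi + l2 * norm xj + l3 * norm bs"
  proof -
    have "norm s \<le> norm (l1 *\<^sub>R xi + l2 *\<^sub>R xj) + norm (l3 *\<^sub>R bs)" using srep norm_triangle_ineq by metis
    also have "\<dots> \<le> norm (l1 *\<^sub>R xi) + norm (l2 *\<^sub>R xj) + norm (l3 *\<^sub>R bs)"
      using norm_triangle_ineq[of "l1 *\<^sub>R xi" "l2 *\<^sub>R xj"] by linarith
    also have "\<dots> = l1 * norm xi + l2 * norm xj + l3 * norm bs" using l1n l2n l3p by simp
    finally show ?thesis .
  qed
  also have "\<dots> \<le> l1 * 1 + l2 * 1 + l3 * 1"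
    using xi xj nbs l1n l2n l3p by (intro add_mono mult_left_mono) auto
  finally have "norm s < 1" using lsum by linarith
  then show False using xs by (simp add: s_def)
qed


lemma kern_dep:
  assumes dim2: "dim (UNIV :: 'a::real_vector set) = 2" and lg: "linear (g::'a \<Rightarrow> real)"
    and gu: "g u \<noteq> 0" and e: "e \<noteq> 0" "g e = 0" and d: "g d = 0"
  shows "\<exists>t. d = t *\<^sub>R e"
proof (rule ccontr)
  assume "\<not> ?thesis"
  then have "\<forall>t. d \<noteq> t *\<^sub>R e" by blast
  then obtain a b where "u = a *\<^sub>R e + b *\<^sub>R d" using span2[OF dim2 e(1)] by blast
  then have "g u = 0" using e d lin_facts[OF lg] by simp
  then show False using gu by simp
qed

lemma common_ker:
  assumes dim2: "dim (UNIV :: 'a::real_vector set) = 2" and lg: "linear (g::'a \<Rightarrow> real)"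
    and lh: "linear (h::'a \<Rightarrow> real)"
    and gu: "g u \<noteq> 0" and d: "d \<noteq> 0" "g d = 0" "h d = 0"
  shows "\<exists>l. \<forall>x. h x = l * g x"
proof -
  have nu: "\<forall>t. u \<noteq> t *\<^sub>R d"
  proof
    fix t show "u \<noteq> t *\<^sub>R d" using gu d lin_facts[OF lg] by auto
  qed
  show ?thesis
  proof (intro exI allI)
    fix x
    obtain a b where x: "x = a *\<^sub>R d + b *\<^sub>R u" using span2[OF dim2 d(1) nu] by blast
    have "h x = b * h u" using x d lin_facts[OF lh] by simp
    moreover have "g x = b * g u" using x d lin_facts[OF lg] by simp
    ultimately show "h x = (h u / g u) * g x" using gu by simp
  qed
qed

lemma kern_exists:
  assumes dim2: "dim (UNIV :: 'a::real_vector set) = 2" and lg: "linear (g::'a \<Rightarrow> real)"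
  shows "\<exists>e. e \<noteq> 0 \<and> g e = 0"
proof -
  obtain B :: "'a set" where B: "independent B" "UNIV \<subseteq> span B" "card B = 2"
    using basis_exists[of "UNIV :: 'a set"] dim2 by auto
  then obtain v1 v2 where B2: "B = {v1, v2}" "v1 \<noteq> v2"
    by (meson card_2_iff)
  have v1: "v1 \<noteq> 0" using B B2 by (metis dependent_zero insertI1)
  have v2: "v2 \<noteq> 0" using B B2 by (metis dependent_zero insertI1 insert_commute)
  have nv: "v1 \<notin> span {v2}"
    using B(1) B2 by (simp add: independent_insert)
  show ?thesis
  proof (cases "g v2 = 0")
    case True then show ?thesis using v2 by blast
  next
    case False
    define e where "e = (g v1) *\<^sub>R v2 - (g v2) *\<^sub>R v1"
    have "g e = 0" using lin_facts[OF lg] by (simp add: e_def)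
    moreover have "e \<noteq> 0"
    proof
      assume "e = 0"
      then have h: "(g v2) *\<^sub>R v1 = (g v1) *\<^sub>R v2" by (simp add: e_def)
      have "v1 = (1 / g v2) *\<^sub>R ((g v2) *\<^sub>R v1)" using False by simp
      also have "\<dots> = (g v1 / g v2) *\<^sub>R v2" using h by simp
      finally have "v1 = (g v1 / g v2) *\<^sub>R v2" .
      then have "v1 \<in> span {v2}" by (metis span_base span_scale singletonI)
      then show False using nv by simp
    qed
    ultimately show ?thesis by blast
  qed
qed

lemma func_rep:
  assumes dim2: "dim (UNIV :: 'a::real_vector set) = 2"
    and l1: "linear (g1::'a \<Rightarrow> real)" and l2: "linear g2" and l3: "linear g3"
    and gu: "g1 u \<noteq> 0" and np: "\<not> (\<exists>l. \<forall>x. g2 x = l * g1 x)"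
  shows "\<exists>\<alpha> \<beta>. \<forall>x. g3 x = \<alpha> * g1 x + \<beta> * g2 x"
proof -
  obtain e where e: "e \<noteq> 0" "g1 e = 0" using kern_exists[OF dim2 l1] by blast
  have g2e: "g2 e \<noteq> 0" using common_ker[OF dim2 l1 l2 gu e(1,2)] np by blast
  define \<beta> where "\<beta> = g3 e / g2 e"
  define h where "h = (\<lambda>x. g3 x - \<beta> * g2 x)"
  have lh: "linear h"
    by (rule linearI) (simp_all add: h_def lin_facts[OF l2] lin_facts[OF l3] algebra_simps)
  have "h e = 0" using g2e by (simp add: h_def \<beta>_def)
  then obtain \<alpha> where "\<forall>x. h x = \<alpha> * g1 x" using common_ker[OF dim2 l1 lh gu e(1,2)] by blast
  then have "\<forall>x. g3 x = \<alpha> * g1 x + \<beta> * g2 x" by (simp add: h_def algebra_simps)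
  then show ?thesis by blast
qed


lemma conv_norm:
  assumes "0 \<le> \<theta>" "\<theta> \<le> 1" "norm (y::'a::real_normed_vector) \<le> 1" "norm z \<le> 1"
  shows "norm (\<theta> *\<^sub>R y + (1 - \<theta>) *\<^sub>R z) \<le> 1"
proof -
  have "norm (\<theta> *\<^sub>R y + (1 - \<theta>) *\<^sub>R z) \<le> \<theta> * norm y + (1 - \<theta>) * norm z"
    using norm_triangle_ineq[of "\<theta> *\<^sub>R y" "(1 - \<theta>) *\<^sub>R z"] assms by simp
  also have "\<dots> \<le> \<theta> * 1 + (1 - \<theta>) * 1" using assms by (intro add_mono mult_left_mono) auto
  finally show ?thesis by simp
qed

lemma between:
  fixes a b c :: real
  assumes "(a \<le> b \<and> b \<le> c) \<or> (c \<le> b \<and> b \<le> a)"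
  shows "\<exists>\<theta>. 0 \<le> \<theta> \<and> \<theta> \<le> 1 \<and> b = \<theta> * a + (1 - \<theta>) * c"
proof (cases "a = c")
  case True then show ?thesis using assms by (intro exI[of _ 1]) auto
next
  case False
  define \<theta> where "\<theta> = (b - c) / (a - c)"
  have h: "\<theta> * (a - c) = b - c" using False by (simp add: \<theta>_def)
  have "\<theta> * a + (1 - \<theta>) * c = c + \<theta> * (a - c)" by (simp add: algebra_simps)
  then have "b = \<theta> * a + (1 - \<theta>) * c" using h by linarith
  moreover have "0 \<le> \<theta> \<and> \<theta> \<le> 1" using assms False
    by (auto simp: \<theta>_def divide_simps)
  ultimately show ?thesis by blast
qed

lemma pcrux:
  fixes gi gj gk :: "'a::real_normed_vector \<Rightarrow> real"
  assumes dim2: "dim (UNIV::'a set) = 2"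
    and li: "linear gi" and lj: "linear gj" and lk: "linear gk"
    and bi: "\<forall>y. gi y \<le> norm y" and bj: "\<forall>y. gj y \<le> norm y" and bk: "\<forall>y. gk y \<le> norm y"
    and par: "\<forall>x. gj x = - gi x"
    and xi: "norm xi \<le> 1" "gi xi = 1" and xj: "norm xj \<le> 1" "gj xj = 1" and xs: "norm (xi + xj) = 1"
    and zi: "norm zi \<le> 1" "gi zi = 1" and zk: "norm zk \<le> 1" "gk zk = 1" and zs: "norm (zi + zk) \<le> 1"
    and wj: "norm wj \<le> 1" "gj wj = 1" and wk: "norm wk \<le> 1" "gk wk = 1" and ws: "norm (wj + wk) \<le> 1"
  shows "\<exists>ai aj. norm ai \<le> 1 \<and> gi ai = 1 \<and> norm aj \<le> 1 \<and> gj aj = 1 \<and> gk (ai + aj) \<le> -1"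
proof -
  note Li = lin_facts[OF li] and Lj = lin_facts[OF lj] and Lk = lin_facts[OF lk]
  define s where "s = xi + xj"
  have gis: "gi s = 0" using xi xj par Li(1) by (simp add: s_def)
  have gizk: "gi zk \<le> 0" using bi[rule_format, of "zi + zk"] zs zi Li(1) by simp
  have giwk: "gi wk \<ge> 0" using bj[rule_format, of "wj + wk"] ws wj Lj(1) par by simp
  obtain p where p: "norm p \<le> 1" "gk p = 1" "gi p = 0"
  proof (cases "gi wk = gi zk")
    case True then show ?thesis using that[of zk] zk gizk giwk by auto
  next
    case False
    define \<theta> where "\<theta> = gi wk / (gi wk - gi zk)"
    have th: "0 \<le> \<theta>" "\<theta> \<le> 1" using gizk giwk False by (auto simp: \<theta>_def divide_simps)
    define p where "p = \<theta> *\<^sub>R zk + (1 - \<theta>) *\<^sub>R wk"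
    have "norm p \<le> 1" using conv_norm[OF th zk(1) wk(1)] by (simp add: p_def)
    moreover have "gk p = 1" using zk wk Lk(1,4) by (simp add: p_def)
    moreover have "gi p = 0"
    proof -
      have "gi p = \<theta> * gi zk + (1 - \<theta>) * gi wk" using Li(1,4) by (simp add: p_def)
      also have "\<dots> = gi wk + \<theta> * (gi zk - gi wk)" by (simp add: algebra_simps)
      also have "\<theta> * (gi zk - gi wk) = - gi wk" using False by (simp add: \<theta>_def field_simps)
      finally show ?thesis by simp
    qed
    ultimately show ?thesis using that by blast
  qed
  have pn: "norm p = 1" using p bk[rule_format, of p] by linarith
  then have p0: "p \<noteq> 0" by auto
  obtain t where t: "s = t *\<^sub>R p" using kern_dep[OF dim2 li _ p0 p(3) gis, of xi] xi by auto
  have "\<bar>t\<bar> = 1" using t pn xs by (simp add: s_def)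
  then have "t = 1 \<or> t = -1" by linarith
  then show ?thesis
  proof
    assume "t = -1"
    then have g1: "gk (xi + xj) = -1" using t p Lk by (simp add: s_def)
    show ?thesis using xi xj g1 by (intro exI[of _ xi] exI[of _ xj]) simp
  next
    assume "t = 1"
    then have "gk (xi + xj) = 1" using t p Lk by (simp add: s_def)
    then have "gk (- (xi + xj)) = -1" using Lk(3)[of "xi + xj"] by linarith
    moreover have "(- xj) + (- xi) = - (xi + xj)" by simp
    ultimately have "gk ((- xj) + (- xi)) = -1" by metis
    moreover have "gi (- xj) = 1" using xj par Li by simp
    moreover have "gj (- xi) = 1" using xi par Lj by simp
    ultimately show ?thesis using xi xj by (intro exI[of _ "- xj"] exI[of _ "- xi"]) auto
  qed
qed

lemma excl:
  fixes gi gj gk :: "'a::real_normed_vector \<Rightarrow> real"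
  assumes li: "linear gi" and lj: "linear gj" and lk: "linear gk"
    and bi: "\<forall>y. gi y \<le> norm y" and bj: "\<forall>y. gj y \<le> norm y" and bk: "\<forall>y. gk y \<le> norm y"
    and rep: "\<forall>x. gk x = \<alpha> * gi x + \<beta> * gj x" and al: "0 < \<alpha>" and be: "0 < \<beta>"
    and zi: "norm zi \<le> 1" "gi zi = 1" and zk: "norm zk \<le> 1" "gk zk = 1" and zs: "norm (zi + zk) \<le> 1"
    and wj: "norm wj \<le> 1" "gj wj = 1" and wk: "norm wk \<le> 1" "gk wk = 1" and ws: "norm (wj + wk) \<le> 1"
  shows "\<forall>x. (norm x \<le> 1 \<and> gi x = 1) \<or> (norm x \<le> 1 \<and> gj x = 1) \<or> (norm x \<le> 1 \<and> gk x = 1) \<longrightarrow> 0 \<le> gk x"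
proof -
  note Lk = lin_facts[OF lk]
  have "gk zi \<le> 0" using bk[rule_format, of "zi + zk"] zs zk Lk(1) by simp
  moreover have "gk zi = \<alpha> + \<beta> * gj zi" using rep zi by simp
  moreover have "gj zi \<ge> -1" using gneg[OF lj bj, of zi] zi by linarith
  moreover have "\<beta> * gj zi \<ge> \<beta> * (-1)" using mult_left_mono[of "-1" "gj zi" \<beta>] be calculation by linarith
  ultimately have ab: "\<alpha> \<le> \<beta>" by linarith
  have "gk wj \<le> 0" using bk[rule_format, of "wj + wk"] ws wk Lk(1) by simp
  moreover have "gk wj = \<alpha> * gi wj + \<beta>" using rep wj by simp
  moreover have "gi wj \<ge> -1" using gneg[OF li bi, of wj] wj by linarith
  moreover have "\<alpha> * gi wj \<ge> \<alpha> * (-1)" using mult_left_mono[of "-1" "gi wj" \<alpha>] al calculation by linarith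
  ultimately have ba: "\<beta> \<le> \<alpha>" by linarith
  show ?thesis
  proof (intro allI impI)
    fix x assume x: "(norm x \<le> 1 \<and> gi x = 1) \<or> (norm x \<le> 1 \<and> gj x = 1) \<or> (norm x \<le> 1 \<and> gk x = 1)"
    have gi1: "gi x \<ge> -1" if "norm x \<le> 1" using gneg[OF li bi, of x] that by linarith
    have gj1: "gj x \<ge> -1" if "norm x \<le> 1" using gneg[OF lj bj, of x] that by linarith
    show "0 \<le> gk x" using x
    proof (elim disjE conjE)
      assume "norm x \<le> 1" "gi x = 1"
      then have "gk x = \<alpha> + \<beta> * gj x" "gj x \<ge> -1" using rep gj1 by auto
      moreover have "\<beta> * gj x \<ge> \<beta> * (-1)" using mult_left_mono[of "-1" "gj x" \<beta>] be calculation by linarith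
      ultimately show ?thesis using ab ba by linarith
    next
      assume "norm x \<le> 1" "gj x = 1"
      then have "gk x = \<alpha> * gi x + \<beta>" "gi x \<ge> -1" using rep gi1 by auto
      moreover have "\<alpha> * gi x \<ge> \<alpha> * (-1)" using mult_left_mono[of "-1" "gi x" \<alpha>] al calculation by linarith
      ultimately show ?thesis using ab ba by linarith
    qed simp
  qed
qed

lemma prop_neg:
  fixes gi gj :: "'a::real_normed_vector \<Rightarrow> real"
  assumes li: "linear gi" and lj: "linear gj"
    and bi: "\<forall>y. gi y \<le> norm y" and bj: "\<forall>y. gj y \<le> norm y"
    and pr: "\<forall>x. gj x = l * gi x"
    and xi: "norm xi \<le> 1" "gi xi = 1" and xj: "norm xj \<le> 1" "gj xj = 1" and xs: "norm (xi + xj) = 1"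
  shows "l = -1"
proof -
  have a: "gj xi = l" using pr xi by simp
  have "\<bar>l\<bar> \<le> 1" using a gneg[OF lj bj, of xi] bj[rule_format, of xi] xi by auto
  moreover have "1 = l * gi xj" using pr xj by simp
  moreover have "\<bar>gi xj\<bar> \<le> 1" using gneg[OF li bi, of xj] bi[rule_format, of xj] xj by auto
  ultimately have l1: "\<bar>l\<bar> = 1"
  proof -
    assume A: "\<bar>l\<bar> \<le> 1" "1 = l * gi xj" "\<bar>gi xj\<bar> \<le> 1"
    have "1 = \<bar>l\<bar> * \<bar>gi xj\<bar>" using A(2) by (metis abs_mult abs_one)
    also have "\<dots> \<le> \<bar>l\<bar> * 1" using A(3) by (intro mult_left_mono) auto
    finally show ?thesis using A(1) by linarith
  qed
  have "l \<noteq> 1"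
  proof
    assume "l = 1"
    then have "gi xj = 1" using pr xj by simp
    then have "gi (xi + xj) = 2" using xi lin_facts[OF li] by simp
    then show False using bi[rule_format, of "xi + xj"] xs by simp
  qed
  then show ?thesis using l1 by linarith
qed

lemma interp:
  fixes gi gj gk :: "'a::real_normed_vector \<Rightarrow> real"
  assumes li: "linear gi" and lj: "linear gj" and lk: "linear gk"
    and xi: "norm xi \<le> 1" "gi xi = 1" and xj: "norm xj \<le> 1" "gj xj = 1" and xs: "gk (xi + xj) \<ge> -1"
    and ai: "norm ai \<le> 1" "gi ai = 1" and aj: "norm aj \<le> 1" "gj aj = 1" and as: "gk (ai + aj) \<le> -1"
  shows "\<exists>pi pj. norm pi \<le> 1 \<and> gi pi = 1 \<and> norm pj \<le> 1 \<and> gj pj = 1 \<and> gk (pi + pj) = -1"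
proof -
  obtain \<theta> where th: "0 \<le> \<theta>" "\<theta> \<le> 1" "-1 = \<theta> * gk (ai + aj) + (1 - \<theta>) * gk (xi + xj)"
    using between[of "gk (ai + aj)" "-1" "gk (xi + xj)"] xs as by auto
  define pi where "pi = \<theta> *\<^sub>R ai + (1 - \<theta>) *\<^sub>R xi"
  define pj where "pj = \<theta> *\<^sub>R aj + (1 - \<theta>) *\<^sub>R xj"
  have "norm pi \<le> 1" "norm pj \<le> 1" using conv_norm[OF th(1,2)] ai xi aj xj by (simp_all add: pi_def pj_def)
  moreover have "gi pi = 1" using ai xi lin_facts(1,4)[OF li] by (simp add: pi_def)
  moreover have "gj pj = 1" using aj xj lin_facts(1,4)[OF lj] by (simp add: pj_def)
  moreover have "gk (pi + pj) = -1"
  proof -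
    have v: "pi + pj = \<theta> *\<^sub>R (ai + aj) + (1 - \<theta>) *\<^sub>R (xi + xj)" by (simp add: pi_def pj_def algebra_simps)
    have "gk (pi + pj) = \<theta> * gk (ai + aj) + (1 - \<theta>) * gk (xi + xj)"
      by (simp only: v lin_facts(1,4)[OF lk])
    then show ?thesis using th(3) by simp
  qed
  ultimately show ?thesis by blast
qed


lemma triple_comb:
  fixes g2 g3 :: "'a::real_normed_vector \<Rightarrow> real"
  assumes l2: "linear g2" and l3: "linear g3"
    and inj: "\<forall>d. g2 d = 0 \<longrightarrow> g3 d = 0 \<longrightarrow> d = 0"
    and X: "x1 + x2 + x3 = 0" "g2 x2 = 1" "g3 x3 = 1"
    and Y: "y1 + y2 + y3 = 0" "g2 y2 = 1" "g3 y3 = 1"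
    and Z: "z1 + z2 + z3 = 0" "g2 z2 = 1" "g3 z3 = 1"
    and h: "x1 = \<theta> *\<^sub>R y1 + (1 - \<theta>) *\<^sub>R z1"
  shows "x2 = \<theta> *\<^sub>R y2 + (1 - \<theta>) *\<^sub>R z2 \<and> x3 = \<theta> *\<^sub>R y3 + (1 - \<theta>) *\<^sub>R z3"
proof -
  define d2 where "d2 = x2 - (\<theta> *\<^sub>R y2 + (1 - \<theta>) *\<^sub>R z2)"
  define d3 where "d3 = x3 - (\<theta> *\<^sub>R y3 + (1 - \<theta>) *\<^sub>R z3)"
  have x1: "x1 = - x2 - x3" using X(1) by (simp add: algebra_simps eq_neg_iff_add_eq_0)
  have y1: "y1 = - y2 - y3" using Y(1) by (simp add: algebra_simps eq_neg_iff_add_eq_0)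
  have z1: "z1 = - z2 - z3" using Z(1) by (simp add: algebra_simps eq_neg_iff_add_eq_0)
  have s: "d3 = - d2" using h unfolding x1 y1 z1 d2_def d3_def by (simp add: algebra_simps)
  have g2d: "g2 d2 = 0" using X Y Z lin_facts(1,2,4)[OF l2] by (simp add: d2_def)
  have g3d: "g3 d3 = 0" using X Y Z lin_facts(1,2,4)[OF l3] by (simp add: d3_def)
  have "g3 d2 = 0" using g3d s lin_facts(3)[OF l3] by simp
  then have "d2 = 0" using inj g2d by blast
  then have "d3 = 0" using s by simp
  then show ?thesis using \<open>d2 = 0\<close> by (simp add: d2_def d3_def)
qed

lemma helly:
  fixes g1 g2 g3 :: "'a::real_normed_vector \<Rightarrow> real"
  assumes l1: "linear g1" and l2: "linear g2" and l3: "linear g3"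
    and ker: "\<forall>d. g1 d = 0 \<longrightarrow> (\<exists>t. d = t *\<^sub>R e)"
    and inj: "\<forall>d. g2 d = 0 \<longrightarrow> g3 d = 0 \<longrightarrow> d = 0"
    and U: "u1 + u2 + u3 = 0" "g1 u1 = 1" "g2 u2 = 1" "g3 u3 = 1" "norm u2 \<le> 1" "norm u3 \<le> 1"
    and V: "v1 + v2 + v3 = 0" "g1 v1 = 1" "g2 v2 = 1" "g3 v3 = 1" "norm v1 \<le> 1" "norm v3 \<le> 1"
    and W: "w1 + w2 + w3 = 0" "g1 w1 = 1" "g2 w2 = 1" "g3 w3 = 1" "norm w1 \<le> 1" "norm w2 \<le> 1"
  shows "\<exists>a1 a2 a3. norm a1 \<le> 1 \<and> g1 a1 = 1 \<and> norm a2 \<le> 1 \<and> g2 a2 = 1 \<and> norm a3 \<le> 1 \<and> g3 a3 = 1 \<and> a1 + a2 + a3 = 0"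
proof -
  have "g1 (v1 - u1) = 0" using U V lin_facts(2)[OF l1] by simp
  then obtain sv where sv: "v1 - u1 = sv *\<^sub>R e" using ker by blast
  have "g1 (w1 - u1) = 0" using U W lin_facts(2)[OF l1] by simp
  then obtain sw where sw: "w1 - u1 = sw *\<^sub>R e" using ker by blast
  have v1: "v1 = u1 + sv *\<^sub>R e" using sv by (simp add: algebra_simps)
  have w1: "w1 = u1 + sw *\<^sub>R e" using sw by (simp add: algebra_simps)
  consider "(sv \<le> 0 \<and> 0 \<le> sw) \<or> (sw \<le> 0 \<and> 0 \<le> sv)"
    | "(0 \<le> sv \<and> sv \<le> sw) \<or> (sw \<le> sv \<and> sv \<le> 0)"
    | "(0 \<le> sw \<and> sw \<le> sv) \<or> (sv \<le> sw \<and> sw \<le> 0)" by linarith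
  then show ?thesis
  proof cases
    case 1
    then obtain \<theta> where th: "0 \<le> \<theta>" "\<theta> \<le> 1" "0 = \<theta> * sv + (1 - \<theta>) * sw"
      using between[of sv 0 sw] by auto
    have "\<theta> *\<^sub>R v1 + (1 - \<theta>) *\<^sub>R w1 = u1 + (\<theta> * sv + (1 - \<theta>) * sw) *\<^sub>R e"
      unfolding v1 w1 by (simp add: algebra_simps)
    then have "u1 = \<theta> *\<^sub>R v1 + (1 - \<theta>) *\<^sub>R w1" using th(3) by simp
    then have "norm u1 \<le> 1" using conv_norm[OF th(1,2) V(5) W(5)] by simp
    then show ?thesis using U by blast
  next
    case 2
    then obtain \<theta> where th: "0 \<le> \<theta>" "\<theta> \<le> 1" "sv = \<theta> * 0 + (1 - \<theta>) * sw"
      using between[of 0 sv sw] by auto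
    have "\<theta> *\<^sub>R u1 + (1 - \<theta>) *\<^sub>R w1 = u1 + ((1 - \<theta>) * sw) *\<^sub>R e"
      unfolding w1 by (simp add: algebra_simps)
    then have "v1 = \<theta> *\<^sub>R u1 + (1 - \<theta>) *\<^sub>R w1" using th(3) v1 by simp
    then have "v2 = \<theta> *\<^sub>R u2 + (1 - \<theta>) *\<^sub>R w2"
      using triple_comb[OF l2 l3 inj V(1,3,4) U(1,3,4) W(1,3,4)] by blast
    then have "norm v2 \<le> 1" using conv_norm[OF th(1,2) U(5) W(6)] by simp
    then show ?thesis using V by blast
  next
    case 3
    then obtain \<theta> where th: "0 \<le> \<theta>" "\<theta> \<le> 1" "sw = \<theta> * 0 + (1 - \<theta>) * sv"
      using between[of 0 sw sv] by auto
    have "\<theta> *\<^sub>R u1 + (1 - \<theta>) *\<^sub>R v1 = u1 + ((1 - \<theta>) * sv) *\<^sub>R e"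
      unfolding v1 by (simp add: algebra_simps)
    then have "w1 = \<theta> *\<^sub>R u1 + (1 - \<theta>) *\<^sub>R v1" using th(3) w1 by simp
    then have "w3 = \<theta> *\<^sub>R u3 + (1 - \<theta>) *\<^sub>R v3"
      using triple_comb[OF l2 l3 inj W(1,3,4) U(1,3,4) V(1,3,4)] by blast
    then have "norm w3 \<le> 1" using conv_norm[OF th(1,2) U(6) V(6)] by simp
    then show ?thesis using W by blast
  qed
qed

lemma norm_func:
  assumes "supporting_line L (cball (0::'a::real_normed_vector) 1)"
  shows "\<exists>g. linear g \<and> (\<forall>y. g y \<le> norm y) \<and> L = {x. g x = 1}"
proof -
  obtain f c where f: "linear (f :: 'a \<Rightarrow> real)" "\<exists>x. f x \<noteq> 0" "L = {x. f x = c}"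
    "cball 0 1 \<subseteq> {x. f x \<le> c}"
    using assms unfolding supporting_line_def by blast
  note F = lin_facts[OF f(1)]
  have fb: "f y \<le> c" if "norm y \<le> 1" for y using f(4) that by auto
  have fy: "f y \<le> c * norm y" for y
  proof (cases "y = 0")
    case True then show ?thesis using F(5) fb[of 0] by simp
  next
    case False
    then have "f ((1 / norm y) *\<^sub>R y) \<le> c" by (intro fb) simp
    then show ?thesis using False F(4) by (simp add: field_simps)
  qed
  obtain x0 where x0: "f x0 \<noteq> 0" using f(2) by blast
  have cp: "c > 0"
  proof (rule ccontr)
    assume "\<not> c > 0"
    then have "f x0 \<le> 0" "f (- x0) \<le> 0" using fy[of x0] fy[of "- x0"]
      by (auto intro: order_trans[OF _ mult_nonpos_nonneg])
    then show False using x0 F(3) by simp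
  qed
  define g where "g = (\<lambda>x. f x / c)"
  have "linear g" unfolding g_def by (rule linearI) (simp_all add: F add_divide_distrib)
  moreover have "\<forall>y. g y \<le> norm y" using fy cp by (simp add: g_def field_simps mult.commute)
  moreover have "L = {x. g x = 1}" using cp f(3) by (auto simp: g_def)
  ultimately show ?thesis by blast
qed


lemma final_m1:
  fixes g1 g2 g3 :: "'a::real_normed_vector \<Rightarrow> real"
  assumes dim2: "dim (UNIV::'a set) = 2"
    and l1: "linear g1" and l2: "linear g2" and l3: "linear g3"
    and b1: "\<forall>y. g1 y \<le> norm y" and b2: "\<forall>y. g2 y \<le> norm y" and b3: "\<forall>y. g3 y \<le> norm y"
    and g1u: "g1 u \<noteq> 0"
    and np23: "\<not> (\<exists>l. \<forall>x. g3 x = l * g2 x)"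
    and w12: "norm x1 \<le> 1" "g1 x1 = 1" "norm x2 \<le> 1" "g2 x2 = 1" "norm (x1 + x2) \<le> 1"
    and w13: "norm y1 \<le> 1" "g1 y1 = 1" "norm y3 \<le> 1" "g3 y3 = 1" "norm (y1 + y3) \<le> 1"
    and w23: "norm z2 \<le> 1" "g2 z2 = 1" "norm z3 \<le> 1" "g3 z3 = 1" "norm (z2 + z3) \<le> 1"
    and C3: "\<exists>a1 a2. norm a1 \<le> 1 \<and> g1 a1 = 1 \<and> norm a2 \<le> 1 \<and> g2 a2 = 1 \<and> g3 (a1 + a2) \<le> -1"
    and C2: "\<exists>a1 a3. norm a1 \<le> 1 \<and> g1 a1 = 1 \<and> norm a3 \<le> 1 \<and> g3 a3 = 1 \<and> g2 (a1 + a3) \<le> -1"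
    and C1: "\<exists>a2 a3. norm a2 \<le> 1 \<and> g2 a2 = 1 \<and> norm a3 \<le> 1 \<and> g3 a3 = 1 \<and> g1 (a2 + a3) \<le> -1"
  shows "\<exists>a1 a2 a3. norm a1 \<le> 1 \<and> g1 a1 = 1 \<and> norm a2 \<le> 1 \<and> g2 a2 = 1 \<and> norm a3 \<le> 1 \<and> g3 a3 = 1 \<and> a1 + a2 + a3 = 0"
proof -
  have h3: "g3 (x1 + x2) \<ge> -1" using gneg[OF l3 b3, of "x1 + x2"] w12(5) by linarith
  have h2: "g2 (y1 + y3) \<ge> -1" using gneg[OF l2 b2, of "y1 + y3"] w13(5) by linarith
  have h1: "g1 (z2 + z3) \<ge> -1" using gneg[OF l1 b1, of "z2 + z3"] w23(5) by linarith
  obtain p1 p2 where p: "norm p1 \<le> 1" "g1 p1 = 1" "norm p2 \<le> 1" "g2 p2 = 1" "g3 (p1 + p2) = -1"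
    using C3 interp[OF l1 l2 l3 w12(1-4) h3] by blast
  obtain q1 q3 where q: "norm q1 \<le> 1" "g1 q1 = 1" "norm q3 \<le> 1" "g3 q3 = 1" "g2 (q1 + q3) = -1"
    using C2 interp[OF l1 l3 l2 w13(1-4) h2] by blast
  obtain r2 r3 where r: "norm r2 \<le> 1" "g2 r2 = 1" "norm r3 \<le> 1" "g3 r3 = 1" "g1 (r2 + r3) = -1"
    using C1 interp[OF l2 l3 l1 w23(1-4) h1] by blast
  obtain e where e: "e \<noteq> 0" "g1 e = 0" using kern_exists[OF dim2 l1] by blast
  have ker: "\<forall>d. g1 d = 0 \<longrightarrow> (\<exists>t. d = t *\<^sub>R e)"
    using kern_dep[OF dim2 l1 g1u e] by blast
  have g2nz: "g2 x2 \<noteq> 0" using w12 by simp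
  have inj: "\<forall>d. g2 d = 0 \<longrightarrow> g3 d = 0 \<longrightarrow> d = 0"
  proof (intro allI impI)
    fix d assume d: "g2 d = 0" "g3 d = 0"
    show "d = 0"
    proof (rule ccontr)
      assume "d \<noteq> 0"
      then show False using common_ker[OF dim2 l2 l3 g2nz _ d] np23 by blast
    qed
  qed
  have U: "(- (r2 + r3)) + r2 + r3 = 0" "g1 (- (r2 + r3)) = 1"
    using lin_facts(3)[OF l1, of "r2 + r3"] r(5) by (simp add: algebra_simps, linarith)
  have V: "q1 + (- (q1 + q3)) + q3 = 0" "g2 (- (q1 + q3)) = 1"
    using lin_facts(3)[OF l2, of "q1 + q3"] q(5) by (simp add: algebra_simps, linarith)
  have W: "p1 + p2 + (- (p1 + p2)) = 0" "g3 (- (p1 + p2)) = 1"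
    using lin_facts(3)[OF l3, of "p1 + p2"] p(5) by (simp add: algebra_simps, linarith)
  show ?thesis
    using helly[OF l1 l2 l3 ker inj U(1,2) r(2,4,1,3) V(1) q(2) V(2) q(4,1,3) W(1) p(2,4) W(2) p(1,3)]
    by blast
qed


lemma lin_neg_fun: "linear (h::'a::real_vector \<Rightarrow> real) \<Longrightarrow> linear (\<lambda>x. - h x)"
  by (rule linearI) (simp_all add: lin_facts)

theorem lemma5p6:
  fixes L :: "nat \<Rightarrow> 'a::real_normed_vector set"
  assumes dim2: "dim (UNIV :: 'a set) = 2"
    and supp: "\<And>i. i \<in> {1,2,3} \<Longrightarrow> supporting_line (L i) (cball 0 1)"
    and pairs: "\<And>i j. i \<in> {1,2,3} \<Longrightarrow> j \<in> {1,2,3} \<Longrightarrow> i \<noteq> j \<Longrightarrow>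
                  \<exists>ai aj. ai \<in> cball 0 1 \<inter> L i \<and> aj \<in> cball 0 1 \<inter> L j \<and> norm (ai + aj) = 1"
    and nothalf: "\<not> in_origin_halfplane
                    ((cball 0 1 \<inter> L 1) \<union> (cball 0 1 \<inter> L 2) \<union> (cball 0 1 \<inter> L 3))"
  shows "\<exists>a1 a2 a3. a1 \<in> cball 0 1 \<inter> L 1 \<and> a2 \<in> cball 0 1 \<inter> L 2 \<and>
                    a3 \<in> cball 0 1 \<inter> L 3 \<and> a1 + a2 + a3 = 0"
proof -
  have "\<forall>i\<in>{1::nat,2,3}. \<exists>g. linear g \<and> (\<forall>y. g y \<le> norm y) \<and> L i = {x. g x = 1}"
    using supp norm_func by blast
  then obtain g where G: "\<forall>i\<in>{1::nat,2,3}. linear (g i) \<and> (\<forall>y. g i y \<le> norm y) \<and> L i = {x. g i x = 1}"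
    using bchoice by metis
  define g1 where "g1 = g 1"
  define g2 where "g2 = g 2"
  define g3 where "g3 = g 3"
  have l1: "linear g1" and b1: "\<forall>y. g1 y \<le> norm y" and L1: "L 1 = {x. g1 x = 1}"
    using G by (simp_all add: g1_def)
  have l2: "linear g2" and b2: "\<forall>y. g2 y \<le> norm y" and L2: "L 2 = {x. g2 x = 1}"
    using G by (simp_all add: g2_def)
  have l3: "linear g3" and b3: "\<forall>y. g3 y \<le> norm y" and L3: "L 3 = {x. g3 x = 1}"
    using G by (simp_all add: g3_def)
  have mem: "x \<in> cball 0 1 \<inter> L i \<longleftrightarrow> norm x \<le> 1 \<and> g i x = 1" if "i \<in> {1,2,3}" for x i
    using G that by auto
  have PP: "\<exists>a b. norm a \<le> 1 \<and> g i a = 1 \<and> norm b \<le> 1 \<and> g j b = 1 \<and> norm (a + b) = 1"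
    if "i \<in> {1,2,3}" "j \<in> {1,2,3}" "i \<noteq> j" for i j
    using pairs[OF that] mem[OF that(1)] mem[OF that(2)] by blast
  obtain a12 b12 where p12: "norm a12 \<le> 1" "g1 a12 = 1" "norm b12 \<le> 1" "g2 b12 = 1" "norm (a12 + b12) = 1"
    using PP[of 1 2] by (auto simp: g1_def g2_def)
  obtain a13 b13 where p13: "norm a13 \<le> 1" "g1 a13 = 1" "norm b13 \<le> 1" "g3 b13 = 1" "norm (a13 + b13) = 1"
    using PP[of 1 3] by (auto simp: g1_def g3_def)
  obtain a23 b23 where p23: "norm a23 \<le> 1" "g2 a23 = 1" "norm b23 \<le> 1" "g3 b23 = 1" "norm (a23 + b23) = 1"
    using PP[of 2 3] by (auto simp: g2_def g3_def)
  obtain a21 b21 where p21: "norm a21 \<le> 1" "g2 a21 = 1" "norm b21 \<le> 1" "g1 b21 = 1" "norm (a21 + b21) = 1"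
    using PP[of 2 1] by (auto simp: g1_def g2_def)
  obtain a31 b31 where p31: "norm a31 \<le> 1" "g3 a31 = 1" "norm b31 \<le> 1" "g1 b31 = 1" "norm (a31 + b31) = 1"
    using PP[of 3 1] by (auto simp: g1_def g3_def)
  obtain a32 b32 where p32: "norm a32 \<le> 1" "g3 a32 = 1" "norm b32 \<le> 1" "g2 b32 = 1" "norm (a32 + b32) = 1"
    using PP[of 3 2] by (auto simp: g2_def g3_def)
  have le12: "norm (a12 + b12) \<le> 1" and le13: "norm (a13 + b13) \<le> 1" and le23: "norm (a23 + b23) \<le> 1"
    and le21: "norm (a21 + b21) \<le> 1" and le31: "norm (a31 + b31) \<le> 1" and le32: "norm (a32 + b32) \<le> 1"
    using p12 p13 p23 p21 p31 p32 by simp_all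
  have NH: "\<exists>x. norm x \<le> 1 \<and> (g1 x = 1 \<or> g2 x = 1 \<or> g3 x = 1) \<and> h x < 0"
    if lh: "linear h" and hnz: "h c \<noteq> 0" for h :: "'a \<Rightarrow> real" and c :: 'a
  proof (rule ccontr)
    assume A: "\<not> ?thesis"
    have c1: "linear (\<lambda>x. - h x)" using lin_neg_fun[OF lh] .
    have c2: "\<exists>x. - h x \<noteq> 0" using hnz by auto
    have c3: "(cball 0 1 \<inter> L 1) \<union> (cball 0 1 \<inter> L 2) \<union> (cball 0 1 \<inter> L 3) \<subseteq> {x. - h x \<le> 0}"
      using A L1 L2 L3 by (auto simp: not_less)
    have "in_origin_halfplane ((cball 0 1 \<inter> L 1) \<union> (cball 0 1 \<inter> L 2) \<union> (cball 0 1 \<inter> L 3))"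
      unfolding in_origin_halfplane_def using c1 c2 c3 by blast
    then show False using nothalf by blast
  qed
  have final: ?thesis if "\<exists>a1 a2 a3. norm a1 \<le> 1 \<and> g1 a1 = 1 \<and> norm a2 \<le> 1 \<and> g2 a2 = 1 \<and> norm a3 \<le> 1 \<and> g3 a3 = 1 \<and> a1 + a2 + a3 = 0"
    using that L1 L2 L3 by auto
  have g1u: "g1 a12 \<noteq> 0" using p12 by simp
  show ?thesis
  proof (cases "\<exists>l. \<forall>x. g2 x = l * g1 x")
    case True
    then obtain l where l: "\<forall>x. g2 x = l * g1 x" by blast
    have "l = -1" using prop_neg[OF l1 l2 b1 b2 l p12] .
    then have par: "\<forall>x. g2 x = - g1 x" using l by simp
    have np23: "\<not> (\<exists>m. \<forall>x. g3 x = m * g2 x)"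
    proof
      assume "\<exists>m. \<forall>x. g3 x = m * g2 x"
      then obtain m where m: "\<forall>x. g3 x = m * g2 x" by blast
      then have "\<forall>x. g3 x = (- m) * g1 x" using par by simp
      then have "- m = -1" using prop_neg[OF l1 l3 b1 b3 _ p13] by blast
      then have "m = 1" by simp
      then have "\<forall>x. g3 x = 1 * g2 x" using m by simp
      then have "(1::real) = -1" using prop_neg[OF l2 l3 b2 b3 _ p23] by blast
      then show False by simp
    qed
    have C3: "\<exists>a1 a2. norm a1 \<le> 1 \<and> g1 a1 = 1 \<and> norm a2 \<le> 1 \<and> g2 a2 = 1 \<and> g3 (a1 + a2) \<le> -1"
      using pcrux[OF dim2 l1 l2 l3 b1 b2 b3 par p12(1-5) p13(1-4) le13 p23(1-4) le23] .
    have C1: "\<exists>a2 a3. norm a2 \<le> 1 \<and> g2 a2 = 1 \<and> norm a3 \<le> 1 \<and> g3 a3 = 1 \<and> g1 (a2 + a3) \<le> -1"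
      using crux[OF dim2 l2 l3 l1 b2 b3 b1 _ _ _ p23(1-5) p21(1-4) le21 p31(1-4) le31, of 1 0] par by simp
    have C2: "\<exists>a1 a3. norm a1 \<le> 1 \<and> g1 a1 = 1 \<and> norm a3 \<le> 1 \<and> g3 a3 = 1 \<and> g2 (a1 + a3) \<le> -1"
      using crux[OF dim2 l1 l3 l2 b1 b3 b2 _ _ _ p13(1-5) p12(1-4) le12 p32(1-4) le32, of 1 0] par by simp
    show ?thesis
      by (rule final, rule final_m1[OF dim2 l1 l2 l3 b1 b2 b3 g1u np23 p12(1-4) le12 p13(1-4) le13 p23(1-4) le23 C3 C2 C1])
  next
    case nP12: False
    show ?thesis
    proof (cases "\<exists>l. \<forall>x. g3 x = l * g1 x")
      case True
      then obtain l where l: "\<forall>x. g3 x = l * g1 x" by blast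
      have "l = -1" using prop_neg[OF l1 l3 b1 b3 l p13] .
      then have par: "\<forall>x. g3 x = - g1 x" using l by simp
      have np23: "\<not> (\<exists>m. \<forall>x. g3 x = m * g2 x)"
      proof
        assume "\<exists>m. \<forall>x. g3 x = m * g2 x"
        then obtain m where m: "\<forall>x. g3 x = m * g2 x" by blast
        have m0: "m \<noteq> 0" using m p13 by auto
        have "\<forall>x. g2 x = (- 1 / m) * g1 x"
        proof
          fix x have "m * g2 x = - g1 x" using m par by metis
          then show "g2 x = (- 1 / m) * g1 x" using m0 by (simp add: field_simps)
        qed
        then show False using nP12 by blast
      qed
      have C2: "\<exists>a1 a3. norm a1 \<le> 1 \<and> g1 a1 = 1 \<and> norm a3 \<le> 1 \<and> g3 a3 = 1 \<and> g2 (a1 + a3) \<le> -1"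
        using pcrux[OF dim2 l1 l3 l2 b1 b3 b2 par p13(1-5) p12(1-4) le12 p32(1-4) le32] .
      have C1: "\<exists>a2 a3. norm a2 \<le> 1 \<and> g2 a2 = 1 \<and> norm a3 \<le> 1 \<and> g3 a3 = 1 \<and> g1 (a2 + a3) \<le> -1"
        using crux[OF dim2 l2 l3 l1 b2 b3 b1 _ _ _ p23(1-5) p21(1-4) le21 p31(1-4) le31, of 0 1] par by simp
      have C3: "\<exists>a1 a2. norm a1 \<le> 1 \<and> g1 a1 = 1 \<and> norm a2 \<le> 1 \<and> g2 a2 = 1 \<and> g3 (a1 + a2) \<le> -1"
        using crux[OF dim2 l1 l2 l3 b1 b2 b3 _ _ _ p12(1-5) p13(1-4) le13 p23(1-4) le23, of 1 0] par by simp
      show ?thesis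
        by (rule final, rule final_m1[OF dim2 l1 l2 l3 b1 b2 b3 g1u np23 p12(1-4) le12 p13(1-4) le13 p23(1-4) le23 C3 C2 C1])
    next
      case nP13: False
      show ?thesis
      proof (cases "\<exists>l. \<forall>x. g3 x = l * g2 x")
        case True
        then obtain l where l: "\<forall>x. g3 x = l * g2 x" by blast
        have "l = -1" using prop_neg[OF l2 l3 b2 b3 l p23] .
        then have par: "\<forall>x. g3 x = - g2 x" using l by simp
        have C1: "\<exists>a2 a3. norm a2 \<le> 1 \<and> g2 a2 = 1 \<and> norm a3 \<le> 1 \<and> g3 a3 = 1 \<and> g1 (a2 + a3) \<le> -1"
          using pcrux[OF dim2 l2 l3 l1 b2 b3 b1 par p23(1-5) p21(1-4) le21 p31(1-4) le31] .
        have C2: "\<exists>a1 a3. norm a1 \<le> 1 \<and> g1 a1 = 1 \<and> norm a3 \<le> 1 \<and> g3 a3 = 1 \<and> g2 (a1 + a3) \<le> -1"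
          using crux[OF dim2 l1 l3 l2 b1 b3 b2 _ _ _ p13(1-5) p12(1-4) le12 p32(1-4) le32, of 0 1] par by simp
        have C3: "\<exists>a1 a2. norm a1 \<le> 1 \<and> g1 a1 = 1 \<and> norm a2 \<le> 1 \<and> g2 a2 = 1 \<and> g3 (a1 + a2) \<le> -1"
          using crux[OF dim2 l1 l2 l3 b1 b2 b3 _ _ _ p12(1-5) p13(1-4) le13 p23(1-4) le23, of 0 1] par by simp
        have C3': "\<exists>a1 a2. norm a1 \<le> 1 \<and> g2 a1 = 1 \<and> norm a2 \<le> 1 \<and> g1 a2 = 1 \<and> g3 (a1 + a2) \<le> -1"
          using C3 by (metis add.commute)
        have g2u: "g2 a21 \<noteq> 0" using p21 by simp
        obtain c1 c2 c3 where c: "norm c1 \<le> 1" "g2 c1 = 1" "norm c2 \<le> 1" "g1 c2 = 1" "norm c3 \<le> 1" "g3 c3 = 1" "c1 + c2 + c3 = 0"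
          using final_m1[OF dim2 l2 l1 l3 b2 b1 b3 g2u nP13 p21(1-4) le21 p23(1-4) le23 p13(1-4) le13 C3' C1 C2]
          by blast
        show ?thesis
          by (rule final) (metis c add.commute)
      next
        case nP23: False
        obtain \<alpha> \<beta> where rep: "\<forall>x. g3 x = \<alpha> * g1 x + \<beta> * g2 x"
          using func_rep[OF dim2 l1 l2 l3 g1u nP12] by blast
        have a0: "\<alpha> \<noteq> 0"
        proof
          assume "\<alpha> = 0" then have "\<forall>x. g3 x = \<beta> * g2 x" using rep by simp
          then show False using nP23 by blast
        qed
        have be0: "\<beta> \<noteq> 0"
        proof
          assume "\<beta> = 0" then have "\<forall>x. g3 x = \<alpha> * g1 x" using rep by simp
          then show False using nP13 by blast
        qed
        consider "\<alpha> > 0" "\<beta> > 0" | "\<alpha> > 0" "\<beta> < 0" | "\<alpha> < 0" "\<beta> > 0" | "\<alpha> < 0" "\<beta> < 0"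
          using a0 be0 by linarith
        then show ?thesis
        proof cases
          case 1
          have E: "\<forall>x. (norm x \<le> 1 \<and> g1 x = 1) \<or> (norm x \<le> 1 \<and> g2 x = 1) \<or> (norm x \<le> 1 \<and> g3 x = 1) \<longrightarrow> 0 \<le> g3 x"
            using excl[OF l1 l2 l3 b1 b2 b3 rep 1 p13(1-4) le13 p23(1-4) le23] .
          obtain x where "norm x \<le> 1" "g1 x = 1 \<or> g2 x = 1 \<or> g3 x = 1" "g3 x < 0"
            using NH[OF l3, of b13] p13 by auto
          then show ?thesis using E by auto
        next
          case 2
          have rep1: "\<forall>x. g1 x = (1 / \<alpha>) * g3 x + (- \<beta> / \<alpha>) * g2 x"
            using rep 2 by (simp add: field_simps)
          have E: "\<forall>x. (norm x \<le> 1 \<and> g3 x = 1) \<or> (norm x \<le> 1 \<and> g2 x = 1) \<or> (norm x \<le> 1 \<and> g1 x = 1) \<longrightarrow> 0 \<le> g1 x"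
            using excl[OF l3 l2 l1 b3 b2 b1 rep1 _ _ p31(1-4) le31 p21(1-4) le21] 2 by (simp add: divide_neg_pos)
          obtain x where "norm x \<le> 1" "g1 x = 1 \<or> g2 x = 1 \<or> g3 x = 1" "g1 x < 0"
            using NH[OF l1, of a12] p12 by auto
          then show ?thesis using E by auto
        next
          case 3
          have rep2: "\<forall>x. g2 x = (1 / \<beta>) * g3 x + (- \<alpha> / \<beta>) * g1 x"
            using rep 3 by (simp add: field_simps)
          have E: "\<forall>x. (norm x \<le> 1 \<and> g3 x = 1) \<or> (norm x \<le> 1 \<and> g1 x = 1) \<or> (norm x \<le> 1 \<and> g2 x = 1) \<longrightarrow> 0 \<le> g2 x"
            using excl[OF l3 l1 l2 b3 b1 b2 rep2 _ _ p32(1-4) le32 p12(1-4) le12] 3 by (simp add: divide_neg_pos)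
          obtain x where "norm x \<le> 1" "g1 x = 1 \<or> g2 x = 1 \<or> g3 x = 1" "g2 x < 0"
            using NH[OF l2, of b12] p12 by auto
          then show ?thesis using E by auto
        next
          case 4
          have r3: "\<forall>x. - g3 x = (- \<alpha>) * g1 x + (- \<beta>) * g2 x" using rep by simp
          have r1: "\<forall>x. - g1 x = (\<beta> / \<alpha>) * g2 x + (- 1 / \<alpha>) * g3 x"
            using rep 4 by (simp add: field_simps)
          have r2: "\<forall>x. - g2 x = (\<alpha> / \<beta>) * g1 x + (- 1 / \<beta>) * g3 x"
            using rep 4 by (simp add: field_simps)
          have C3: "\<exists>a1 a2. norm a1 \<le> 1 \<and> g1 a1 = 1 \<and> norm a2 \<le> 1 \<and> g2 a2 = 1 \<and> g3 (a1 + a2) \<le> -1"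
            using crux[OF dim2 l1 l2 l3 b1 b2 b3 r3 _ _ p12(1-5) p13(1-4) le13 p23(1-4) le23] 4 by simp
          have C1: "\<exists>a2 a3. norm a2 \<le> 1 \<and> g2 a2 = 1 \<and> norm a3 \<le> 1 \<and> g3 a3 = 1 \<and> g1 (a2 + a3) \<le> -1"
            using crux[OF dim2 l2 l3 l1 b2 b3 b1 r1 _ _ p23(1-5) p21(1-4) le21 p31(1-4) le31] 4
            by (simp add: divide_nonpos_neg divide_neg_neg)
          have C2: "\<exists>a1 a3. norm a1 \<le> 1 \<and> g1 a1 = 1 \<and> norm a3 \<le> 1 \<and> g3 a3 = 1 \<and> g2 (a1 + a3) \<le> -1"
            using crux[OF dim2 l1 l3 l2 b1 b3 b2 r2 _ _ p13(1-5) p12(1-4) le12 p32(1-4) le32] 4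
            by (simp add: divide_nonpos_neg divide_neg_neg)
          show ?thesis
            by (rule final, rule final_m1[OF dim2 l1 l2 l3 b1 b2 b3 g1u nP23 p12(1-4) le12 p13(1-4) le13 p23(1-4) le23 C3 C2 C1])
        qed
      qed
    qed
  qed
qed

end
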